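(* Let $\mathcal{A}$, $\mathcal{B}$ be ordered groups and $\mathcal{M}=\mathcal{A}\times\mathcal{B}$. Let $x_{12},x_{13},x_{14},x_{23},x_{24},x_{34}$ be independent symbols, let $\mathfrak{G}$ be the free abelian group on these six symbols, let $F$ be the field of fractions of the group algebra $\mathbb{Q}\mathfrak{G}$, and let $L=F\mathcal{M}$ be the group algebra of $\mathcal{M}$ over $F$. Let $$X=\begin{pmatrix}1&x_{12}&x_{13}&x_{14}\\0&1&x_{23}&x_{24}\\0&0&1&x_{34}\\0&0&0&1\end{pmatrix}$$ viewed as a matrix over $L$ (each $x_{ij}$ identified with $x_{ij}\cdot e$, $e$ the identity of $\mathcal{M}$). Let $a\in L$ with $a\neq 0$ and $a\neq 1$, and let $A=\mathrm{diag}(1,a,1,a)$, where $1$ is the unit of $L$. Then every entry $b_{ik}$ with $i\le k$ of the matrix $B=X^{-1}AX$ is non-zero.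
   Context: An ordered group is a group with a total order $>$ (exactly one of $x>y$, $y>x$, $x=y$; transitive) satisfying $x>y \Rightarrow axb>ayb$ for all $a,b$. The group algebra $K H$ of a group $H$ over a field $K$ consists of formal finite $K$-linear combinations of elements of $H$ with the usual operations. *)

theory Defs
  imports "HOL-Analysis.Analysis" "HOL-Library.Poly_Mapping" "HOL-Library.Product_Plus"
    "HOL-Library.Numeral_Type" "HOL-Computational_Algebra.Fraction_Field"
begin

definition ordered_group :: "'a::{group_add,linorder} itself \<Rightarrow> bool" where
  "ordered_group _ \<longleftrightarrow> (\<forall>x y a b :: 'a. x < y \<longrightarrow> a + x + b < a + y + b)"

datatype sym6 = X12 | X13 | X14 | X23 | X24 | X34

fun sym6_rank :: "sym6 \<Rightarrow> nat" where
  "sym6_rank X12 = 0" | "sym6_rank X13 = 1" | "sym6_rank X14 = 2"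
| "sym6_rank X23 = 3" | "sym6_rank X24 = 4" | "sym6_rank X34 = 5"

lemma sym6_rank_inj: "sym6_rank x = sym6_rank y \<Longrightarrow> x = y"
  by (cases x; cases y; simp)

instantiation sym6 :: linorder
begin
definition less_eq_sym6 :: "sym6 \<Rightarrow> sym6 \<Rightarrow> bool" where
  "less_eq_sym6 x y \<longleftrightarrow> sym6_rank x \<le> sym6_rank y"
definition less_sym6 :: "sym6 \<Rightarrow> sym6 \<Rightarrow> bool" where
  "less_sym6 x y \<longleftrightarrow> sym6_rank x < sym6_rank y"
instance
  by standard (auto simp: less_eq_sym6_def less_sym6_def intro: sym6_rank_inj)
end

type_synonym freeG = "sym6 \<Rightarrow>\<^sub>0 int"
type_synonym QG = "freeG \<Rightarrow>\<^sub>0 rat"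
type_synonym F = "QG fract"

definition xF :: "sym6 \<Rightarrow> F" where
  "xF s = Fract (Poly_Mapping.single (Poly_Mapping.single s 1) 1) 1"

definition xL :: "sym6 \<Rightarrow> ('m::monoid_add \<Rightarrow>\<^sub>0 F)" where
  "xL s = Poly_Mapping.single 0 (xF s)"

text \<open>Matrix indices 0,1,2,3 of type 4 correspond to 1,2,3,4 of the paper.\<close>
definition sym_of :: "4 \<Rightarrow> 4 \<Rightarrow> sym6" where
  "sym_of i j = (if i = 0 \<and> j = 1 then X12 else if i = 0 \<and> j = 2 then X13
     else if i = 0 \<and> j = 3 then X14 else if i = 1 \<and> j = 2 then X23
     else if i = 1 \<and> j = 3 then X24 else X34)"

definition Xmat :: "('m::monoid_add \<Rightarrow>\<^sub>0 F) ^ 4 ^ 4" where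
  "Xmat = (\<chi> i j. if i = j then 1 else if i < j then xL (sym_of i j) else 0)"

definition Amat :: "'r::semiring_1 \<Rightarrow> 'r ^ 4 ^ 4" where
  "Amat a = (\<chi> i j. if i = j then (if i = 1 \<or> i = 3 then a else 1) else 0)"

end

theory Submission imports Defs begin

lemma UNIV4': "(UNIV::4 set) = {0,1,2,3}" using UNIV_4 by auto
lemma sum4': "sum f (UNIV::4 set) = f 0 + f 1 + f 2 + f 3"
  unfolding UNIV4' by (simp add: ac_simps)
lemma all4': "(\<forall>i::4. P i) \<longleftrightarrow> P 0 \<and> P 1 \<and> P 2 \<and> P 3"
  by (metis UNIV4' UNIV_I insert_iff empty_iff)
lemmas less4 = less_bit0_def less_eq_bit0_def bit0.Rep_numeral bit0.Rep_0 bit0.Rep_1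

definition sc :: "F \<Rightarrow> ('m::monoid_add \<Rightarrow>\<^sub>0 F)" where
  "sc c = Poly_Mapping.single 0 c"

lemma sc_right: "p * Poly_Mapping.single 0 (s::'c::comm_semiring_1) = Poly_Mapping.map ((*) s) p"
proof (transfer fixing: s)
  fix p :: "'a \<Rightarrow> 'c"
  assume *: "finite {x. p x \<noteq> 0}"
  have "prod_fun p (\<lambda>k'. s when 0 = k') x = (\<lambda>k. s * p k when p k \<noteq> 0) x" for x
  proof -
    have e: "(\<lambda>aa. if x = a + aa then if 0 = aa then s else 0 else 0) = (\<lambda>aa. if 0 = aa then (if x = a then s else 0) else 0)" for a
      by auto
    have "prod_fun p (\<lambda>k'. s when 0 = k') x = (\<Sum>a. if a = x then p a * s else 0)"
      unfolding prod_fun_def when_def e Sum_any.delta' by (rule Sum_any.cong) auto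
    also have "\<dots> = (\<lambda>k. s * p k when p k \<noteq> 0) x" by (simp add: when_def mult.commute)
    finally show ?thesis .
  qed
  then show "prod_fun p (\<lambda>k'. s when 0 = k') = (\<lambda>k. s * p k when p k \<noteq> 0)"
    by (simp add: fun_eq_iff)
qed

lemma sc_comm: "sc c * p = p * sc c"
  unfolding sc_def sc_right mult_map_scale_conv_mult ..

lemma sc_add: "sc (x + y) = sc x + sc y" by (simp add: sc_def single_add)
lemma sc_mult: "sc (x * y) = sc x * sc y" by (simp add: sc_def mult_single)
lemma sc_0: "sc 0 = 0" by (simp add: sc_def)
lemma sc_1: "sc 1 = 1" by (simp add: sc_def)
lemma sc_inj: "sc x = sc y \<longleftrightarrow> x = y" unfolding sc_def by (rule inj_eq[OF inj_single])

lemma nz: "(a::('m::monoid_add \<Rightarrow>\<^sub>0 F)) \<noteq> 0 \<Longrightarrow> c \<noteq> 0 \<Longrightarrow> a * sc c \<noteq> 0"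
proof
  assume "a \<noteq> 0" "c \<noteq> 0" "a * sc c = 0"
  then have "a * sc c * sc (inverse c) = 0" by simp
  then have "a * sc (c * inverse c) = 0" by (simp add: sc_mult mult.assoc)
  then show False using \<open>a \<noteq> 0\<close> \<open>c \<noteq> 0\<close> by (simp add: sc_1)
qed

definition xf :: "4 \<Rightarrow> 4 \<Rightarrow> F" where
  "xf i j = (if i = j then 1 else if i < j then xF (sym_of i j) else 0)"

definition yf :: "4 \<Rightarrow> 4 \<Rightarrow> F" where
  "yf i j = (if i = j then 1
     else if i = 0 \<and> j = 1 then - xF X12
     else if i = 0 \<and> j = 2 then xF X12 * xF X23 - xF X13
     else if i = 0 \<and> j = 3 then - xF X14 + xF X12 * xF X24 + xF X13 * xF X34 - xF X12 * xF X23 * xF X34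
     else if i = 1 \<and> j = 2 then - xF X23
     else if i = 1 \<and> j = 3 then xF X23 * xF X34 - xF X24
     else if i = 2 \<and> j = 3 then - xF X34 else 0)"

lemma Xmat_sc: "(Xmat :: ('m::monoid_add \<Rightarrow>\<^sub>0 F) ^ 4 ^ 4) = (\<chi> i j. sc (xf i j))"
  by (simp add: vec_eq_iff Xmat_def xf_def xL_def sc_def)

lemma XY_F: "\<forall>i k. (\<Sum>j\<in>UNIV. xf i j * yf j k) = (if i = k then 1 else 0)"
  unfolding all4' by (simp add: all4' sum4' xf_def yf_def less4 sym_of_def algebra_simps)

lemma key: "sc y0 * sc x0 + sc y1 * a * sc x1 + sc y2 * sc x2 + sc y3 * a * sc x3
   = sc (y0*x0 + y1*x1 + y2*x2 + y3*x3) + (a - 1) * sc (y1*x1 + y3*x3)"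
proof -
  have c: "sc y * a * sc x = a * sc (y*x)" for y x
    by (metis sc_comm sc_mult mult.assoc)
  have c': "sc y * a * sc x = a * (sc y * sc x)" for y x
    using c[of y x] by (simp add: sc_mult)
  show ?thesis unfolding c' sc_add sc_mult by (simp add: algebra_simps)
qed

lemma B_entry:
  fixes a :: "'m::monoid_add \<Rightarrow>\<^sub>0 F"
  shows "((\<chi> i j. sc (yf i j)) ** Amat a ** (\<chi> i j. sc (xf i j)))$i$k
    = sc (\<Sum>j\<in>UNIV. yf i j * xf j k) + (a - 1) * sc (yf i 1 * xf 1 k + yf i 3 * xf 3 k)"
proof -
  have "((\<chi> i j. sc (yf i j)) ** Amat a ** (\<chi> i j. sc (xf i j)))$i$k
    = sc (yf i 0) * sc (xf 0 k) + sc (yf i 1) * a * sc (xf 1 k) + sc (yf i 2) * sc (xf 2 k) + sc (yf i 3) * a * sc (xf 3 k)"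
    by (simp add: matrix_matrix_mult_def sum4' Amat_def)
  also have "\<dots> = sc (\<Sum>j\<in>UNIV. yf i j * xf j k) + (a - 1) * sc (yf i 1 * xf 1 k + yf i 3 * xf 3 k)"
    unfolding key sum4' ..
  finally show ?thesis .
qed

lemma YX_F: "\<forall>i k. (\<Sum>j\<in>UNIV. yf i j * xf j k) = (if i = k then 1 else 0)"
  unfolding all4' by (simp add: all4' sum4' xf_def yf_def less4 sym_of_def algebra_simps)

lemma sc_sum4: "sc (\<Sum>j\<in>(UNIV::4 set). f j) = (\<Sum>j\<in>UNIV. sc (f j))"
  by (simp add: sum4' sc_add)

lemma Xmat_Yx: "(Xmat :: ('m::monoid_add \<Rightarrow>\<^sub>0 F) ^ 4 ^ 4) ** (\<chi> i j. sc (yf i j)) = mat 1"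
proof -
  have "(\<Sum>j\<in>UNIV. sc (xf i j) * sc (yf j k)) = (sc (if i = k then 1 else 0) :: 'm \<Rightarrow>\<^sub>0 F)" for i k
    using XY_F unfolding sc_mult[symmetric] sc_sum4[symmetric] by simp
  then show ?thesis
    by (simp add: Xmat_sc matrix_matrix_mult_def mat_def vec_eq_iff sc_0 sc_1)
qed

definition cval :: "4 \<Rightarrow> 4 \<Rightarrow> F" where
  "cval i k = yf i 1 * xf 1 k + yf i 3 * xf 3 k"

definition mono :: "sym6 \<Rightarrow> freeG" where "mono s = Poly_Mapping.single s 1"

lemma xF_nz: "xF s \<noteq> 0"
proof -
  have "Poly_Mapping.single (Poly_Mapping.single s (1::int)) (1::rat) \<noteq> 0"
    by (metis lookup_single_eq lookup_zero zero_neq_one)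
  then show ?thesis by (simp add: xF_def Zero_fract_def eq_fract)
qed

lemma c03: "- xF X14 + xF X13 * xF X34 - xF X12 * xF X23 * xF X34 \<noteq> 0"
proof -
  let ?P = "- Poly_Mapping.single (mono X14) (1::rat) + Poly_Mapping.single (mono X13 + mono X34) 1
     - Poly_Mapping.single (mono X12 + mono X23 + mono X34) 1"
  have e: "- xF X14 + xF X13 * xF X34 - xF X12 * xF X23 * xF X34 = Fract ?P 1"
    by (simp add: xF_def mono_def mult_single)
  have d1: "mono X13 + mono X34 \<noteq> mono X14"
  proof
    assume "mono X13 + mono X34 = mono X14"
    then have "Poly_Mapping.lookup (mono X13 + mono X34) X14 = Poly_Mapping.lookup (mono X14) X14" by simp
    then show False by (simp add: mono_def lookup_add)
  qed
  have d2: "mono X12 + mono X23 + mono X34 \<noteq> mono X14"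
  proof
    assume "mono X12 + mono X23 + mono X34 = mono X14"
    then have "Poly_Mapping.lookup (mono X12 + mono X23 + mono X34) X14 = Poly_Mapping.lookup (mono X14) X14" by simp
    then show False by (simp add: mono_def lookup_add)
  qed
  have "Poly_Mapping.lookup ?P (mono X14) = -1"
    using d1 d2 by (simp add: lookup_add lookup_minus lookup_single)
  then have "?P \<noteq> 0" by auto
  then show ?thesis unfolding e by (simp add: Zero_fract_def eq_fract)
qed

lemma cvals: "cval 0 0 = 0" "cval 1 1 = 1" "cval 2 2 = 0" "cval 3 3 = 1"
  "cval 0 1 \<noteq> 0" "cval 0 2 \<noteq> 0" "cval 0 3 \<noteq> 0" "cval 1 2 \<noteq> 0" "cval 1 3 \<noteq> 0" "cval 2 3 \<noteq> 0"
proof -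
  show "cval 0 0 = 0" "cval 1 1 = 1" "cval 2 2 = 0" "cval 3 3 = 1"
    by (simp_all add: cval_def xf_def yf_def less4)
  show "cval 0 1 \<noteq> 0" "cval 0 2 \<noteq> 0" "cval 1 2 \<noteq> 0" "cval 1 3 \<noteq> 0" "cval 2 3 \<noteq> 0"
    by (simp_all add: cval_def xf_def yf_def less4 sym_of_def xF_nz)
  have "cval 0 3 = - xF X14 + xF X13 * xF X34 - xF X12 * xF X23 * xF X34"
    by (simp add: cval_def xf_def yf_def less4 sym_of_def algebra_simps)
  then show "cval 0 3 \<noteq> 0" using c03 by simp
qed

theorem lemma4:
  fixes a :: "('a::{group_add,linorder} \<times> 'b::{group_add,linorder}) \<Rightarrow>\<^sub>0 F"
    and Y :: "(('a \<times> 'b) \<Rightarrow>\<^sub>0 F) ^ 4 ^ 4"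
  assumes "ordered_group TYPE('a)" and "ordered_group TYPE('b)"
    and "a \<noteq> 0" and "a \<noteq> 1"
    and "Y ** Xmat = mat 1" and "Xmat ** Y = mat 1"
  shows "\<forall>i k. i \<le> k \<longrightarrow> (Y ** Amat a ** Xmat) $ i $ k \<noteq> 0"
proof -
  have YY: "Y = (\<chi> i j. sc (yf i j))"
  proof -
    have "Y = Y ** (Xmat ** (\<chi> i j. sc (yf i j)))" by (simp add: Xmat_Yx)
    also have "\<dots> = (\<chi> i j. sc (yf i j))" by (simp add: matrix_mul_assoc assms(5))
    finally show ?thesis .
  qed
  have a1: "a - 1 \<noteq> 0" using assms(4) by simp
  have B: "(Y ** Amat a ** Xmat) $ i $ k = sc (if i = k then 1 else 0) + (a - 1) * sc (cval i k)" for i k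
    unfolding YY Xmat_sc B_entry cval_def using YX_F by simp
  have N: "c \<noteq> 0 \<Longrightarrow> (a - 1) * sc c \<noteq> 0" for c using nz[OF a1] .
  show ?thesis
    unfolding all4' B
    by (simp add: less4 sc_0 sc_1 cvals N assms(3))
qed

end
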